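(* Let $H$ be a binary tree based graph and $Z$ a uniform read-$d$-times NBP computing $\phi_H$. Let $X\subseteq V(Z)$ separate subsets $Y_1,Y_2$ of ${\bf Roots}(H)$, and let $M$ be a pseudomatching of $H$ between $Y_1$ and $Y_2$. Then for every assignment $S$ (set of literals) to all variables of $V(H)\setminus\bigcup M$ there is $\varphi\in{\bf CNF}(M)$ such that for every computational path $P$ of $Z$ passing through all vertices of $X$ with $S\subseteq A(P)$, the assignment $A(P)$ satisfies $\varphi$.
   Context: A rooted tree is extended if none of its leaves has a sibling. A graph $H$ is a binary tree based graph if it is the edge-disjoint union of extended rooted trees $T_1,\dots,T_m$ with roots $t_1,\dots,t_m$ (forming ${\bf Roots}(H)$) such that every leaf of some $T_i$ is a leaf of exactly two of the trees, and any two trees have at most one common vertex, which is a leaf of both. $T_i,T_j$ are adjacent if they share a leaf $\ell_{i,j}$; $P_{i,j}$ is the path between $t_i$ and $t_j$ in $T_i\cup T_j$; $P^{1/2}_{i\to j}$ is the path in $T_i$ from $t_i$ to $\ell_{i,j}$. A pseudoedge is a pair $\{t_i,t_j\}$ with $T_i,T_j$ adjacent; a pseudomatching is a set of pairwise disjoint pseudoedges, between disjoint $U,V$ if each has one end in each; $\bigcup M$ is the set of ends of pseudoedges of $M$. $\phi_H$ is the CNF on variables $V(H)$ with a clause $C_{i,j}$ (positive literals of $V(P_{i,j})$) for each pseudoedge. ${\bf CNF}(M)$ is the set of CNFs consisting, for each $\{t_i,t_j\}\in M$, of one clause that is either the disjunction of positive literals of $V(P^{1/2}_{i\to j})$ or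 of $V(P^{1/2}_{j\to i})$. An NBP $Z$ is a directed acyclic multigraph with one source and one sink, some edges labelled with literals. A source-sink path is computational if no variable occurs on it with both signs; $A(P)$ is its set of literals. $Z$ computes the function whose satisfying assignments are the total assignments $S$ with $A(P)\subseteq S$ for some computational path $P$. Read-$d$-times: each variable labels at most $d$ edges of each source-sink path; uniform: exactly $d$. A partition of a path $P$ is a sequence $P_1,\dots,P_c$ of subpaths with $P_1$ a prefix, $P_c$ a suffix, and the first vertex of $P_i$ equal to the last vertex of $P_{i-1}$; the set $X$ of the ends of $P_1,\dots,P_{c-1}$ generates it. $X\subseteq V(Z)$ not containing source or sink separates disjoint variable sets $Y_1,Y_2$ if there is a computational path $P$ through all vertices of $X$ such that in the partition $P_1,\dots,P_{|X|+1}$ generated by $X$ on $P$, either variables of $Y_1$ label edges only of odd-indexed $P_i$ and variables of $Y_2$ only of even-indexed $P_i$, or vice versa. *)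

theory Defs
  imports Main
begin

type_synonym 'v lit = "'v \<times> bool"

definition rooted_tree :: "'v set \<Rightarrow> ('v \<times> 'v) set \<Rightarrow> 'v \<Rightarrow> bool" where
  "rooted_tree V E r \<longleftrightarrow> finite V \<and> r \<in> V \<and> E \<subseteq> V \<times> V
     \<and> (\<forall>v\<in>V. (r, v) \<in> E\<^sup>*) \<and> (\<forall>v. (v, r) \<notin> E)
     \<and> (\<forall>v\<in>V - {r}. \<exists>!u. (u, v) \<in> E)"

definition tree_leaves :: "'v set \<Rightarrow> ('v \<times> 'v) set \<Rightarrow> 'v \<Rightarrow> 'v set" where
  "tree_leaves V E r = {v \<in> V. v \<noteq> r \<and> (\<forall>w. (v, w) \<notin> E)}"

definition extended_tree :: "'v set \<Rightarrow> ('v \<times> 'v) set \<Rightarrow> 'v \<Rightarrow> bool" where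
  "extended_tree V E r \<longleftrightarrow> rooted_tree V E r \<and>
     (\<forall>l\<in>tree_leaves V E r. \<not> (\<exists>s u. s \<noteq> l \<and> (u, l) \<in> E \<and> (u, s) \<in> E))"

record ('i, 'v) tbg =
  tidx :: "'i set"
  tverts :: "'i \<Rightarrow> 'v set"
  tedges :: "'i \<Rightarrow> ('v \<times> 'v) set"
  troot :: "'i \<Rightarrow> 'v"

definition lvs :: "('i, 'v) tbg \<Rightarrow> 'i \<Rightarrow> 'v set" where
  "lvs H i = tree_leaves (tverts H i) (tedges H i) (troot H i)"

definition binary_tree_based :: "('i, 'v) tbg \<Rightarrow> bool" where
  "binary_tree_based H \<longleftrightarrow> finite (tidx H)
   \<and> (\<forall>i\<in>tidx H. extended_tree (tverts H i) (tedges H i) (troot H i))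
   \<and> (\<forall>i\<in>tidx H. \<forall>j\<in>tidx H. i \<noteq> j \<longrightarrow>
        (\<forall>(a, b)\<in>tedges H i. (a, b) \<notin> tedges H j \<and> (b, a) \<notin> tedges H j))
   \<and> (\<forall>i\<in>tidx H. \<forall>l\<in>lvs H i. card {j \<in> tidx H. l \<in> lvs H j} = 2)
   \<and> (\<forall>i\<in>tidx H. \<forall>j\<in>tidx H. i \<noteq> j \<longrightarrow>
        card (tverts H i \<inter> tverts H j) \<le> 1 \<and>
        tverts H i \<inter> tverts H j \<subseteq> lvs H i \<inter> lvs H j)"

definition HV :: "('i, 'v) tbg \<Rightarrow> 'v set" where
  "HV H = (\<Union>i\<in>tidx H. tverts H i)"

definition Roots :: "('i, 'v) tbg \<Rightarrow> 'v set" where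
  "Roots H = troot H ` tidx H"

definition adjacent :: "('i, 'v) tbg \<Rightarrow> 'i \<Rightarrow> 'i \<Rightarrow> bool" where
  "adjacent H i j \<longleftrightarrow> i \<in> tidx H \<and> j \<in> tidx H \<and> i \<noteq> j \<and> lvs H i \<inter> lvs H j \<noteq> {}"

definition shared_leaf :: "('i, 'v) tbg \<Rightarrow> 'i \<Rightarrow> 'i \<Rightarrow> 'v" where
  "shared_leaf H i j = (THE l. l \<in> lvs H i \<inter> lvs H j)"

text \<open>Vertex set of \<open>P^{1/2}_{i\<rightarrow>j}\<close>: the path in \<open>T_i\<close> from \<open>t_i\<close> to \<open>\<ell>_{i,j}\<close>,
  i.e. the ancestors (inclusive) of the shared leaf in \<open>T_i\<close>.\<close>
definition half_path :: "('i, 'v) tbg \<Rightarrow> 'i \<Rightarrow> 'i \<Rightarrow> 'v set" where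
  "half_path H i j = {u. (u, shared_leaf H i j) \<in> (tedges H i)\<^sup>*}"

text \<open>Vertex set of \<open>P_{i,j}\<close>, the path between \<open>t_i\<close> and \<open>t_j\<close> in \<open>T_i \<union> T_j\<close>
  (the concatenation of the two half paths at the shared leaf).\<close>
definition full_path :: "('i, 'v) tbg \<Rightarrow> 'i \<Rightarrow> 'i \<Rightarrow> 'v set" where
  "full_path H i j = half_path H i j \<union> half_path H j i"

definition pseudoedge :: "('i, 'v) tbg \<Rightarrow> 'v set \<Rightarrow> bool" where
  "pseudoedge H e \<longleftrightarrow> (\<exists>i j. adjacent H i j \<and> e = {troot H i, troot H j})"

definition pseudomatching_between :: "('i, 'v) tbg \<Rightarrow> 'v set set \<Rightarrow> 'v set \<Rightarrow> 'v set \<Rightarrow> bool" where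
  "pseudomatching_between H M U W \<longleftrightarrow>
     (\<forall>e\<in>M. pseudoedge H e) \<and> (\<forall>e\<in>M. \<forall>e'\<in>M. e \<noteq> e' \<longrightarrow> e \<inter> e' = {})
     \<and> (\<forall>e\<in>M. card (e \<inter> U) = 1 \<and> card (e \<inter> W) = 1)"

definition pos_clause :: "'v set \<Rightarrow> 'v lit set" where
  "pos_clause A = {(v, True) | v. v \<in> A}"

definition phi_H :: "('i, 'v) tbg \<Rightarrow> 'v lit set set" where
  "phi_H H = {pos_clause (full_path H i j) | i j. adjacent H i j}"

definition tree_of_root :: "('i, 'v) tbg \<Rightarrow> 'v \<Rightarrow> 'i" where
  "tree_of_root H t = (THE i. i \<in> tidx H \<and> troot H i = t)"

text \<open>The clause for pseudoedge \<open>e = {t_i, t_j}\<close> choosing end \<open>t = t_i\<close>: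
  positive literals of \<open>V(P^{1/2}_{i\<rightarrow>j})\<close>.\<close>
definition half_clause :: "('i, 'v) tbg \<Rightarrow> 'v set \<Rightarrow> 'v \<Rightarrow> 'v lit set" where
  "half_clause H e t = pos_clause
     (half_path H (tree_of_root H t) (tree_of_root H (the_elem (e - {t}))))"

definition CNF_M :: "('i, 'v) tbg \<Rightarrow> 'v set set \<Rightarrow> 'v lit set set set" where
  "CNF_M H M = {(\<lambda>e. half_clause H e (c e)) ` M | c. \<forall>e\<in>M. c e \<in> e}"

definition satisfies :: "'v lit set \<Rightarrow> 'v lit set set \<Rightarrow> bool" where
  "satisfies S \<phi> \<longleftrightarrow> (\<forall>C\<in>\<phi>. C \<inter> S \<noteq> {})"

definition total_assignment :: "'v set \<Rightarrow> 'v lit set \<Rightarrow> bool" where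
  "total_assignment Var S \<longleftrightarrow> S \<subseteq> Var \<times> UNIV \<and> (\<forall>x\<in>Var. (x, True) \<in> S \<longleftrightarrow> (x, False) \<notin> S)"

record ('n, 'e, 'v) nbp =
  nodes :: "'n set"
  edges :: "'e set"
  etail :: "'e \<Rightarrow> 'n"
  ehead :: "'e \<Rightarrow> 'n"
  elab :: "'e \<Rightarrow> 'v lit option"
  src :: 'n
  snk :: 'n

definition is_walk :: "('n, 'e, 'v) nbp \<Rightarrow> 'e list \<Rightarrow> bool" where
  "is_walk Z P \<longleftrightarrow> set P \<subseteq> edges Z \<and>
     (\<forall>k. Suc k < length P \<longrightarrow> ehead Z (P ! k) = etail Z (P ! Suc k))"

definition is_nbp :: "('n, 'e, 'v) nbp \<Rightarrow> 'v set \<Rightarrow> bool" where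
  "is_nbp Z Var \<longleftrightarrow> finite (nodes Z) \<and> finite (edges Z)
   \<and> (\<forall>e\<in>edges Z. etail Z e \<in> nodes Z \<and> ehead Z e \<in> nodes Z)
   \<and> (\<forall>P. is_walk Z P \<and> P \<noteq> [] \<longrightarrow> etail Z (hd P) \<noteq> ehead Z (last P))
   \<and> src Z \<in> nodes Z \<and> snk Z \<in> nodes Z
   \<and> (\<forall>v\<in>nodes Z. (\<not> (\<exists>e\<in>edges Z. ehead Z e = v)) \<longleftrightarrow> v = src Z)
   \<and> (\<forall>v\<in>nodes Z. (\<not> (\<exists>e\<in>edges Z. etail Z e = v)) \<longleftrightarrow> v = snk Z)
   \<and> (\<forall>e\<in>edges Z. \<forall>l. elab Z e = Some l \<longrightarrow> fst l \<in> Var)"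

definition ss_path :: "('n, 'e, 'v) nbp \<Rightarrow> 'e list \<Rightarrow> bool" where
  "ss_path Z P \<longleftrightarrow> is_walk Z P \<and>
     (if P = [] then src Z = snk Z
      else etail Z (hd P) = src Z \<and> ehead Z (last P) = snk Z)"

definition path_verts :: "('n, 'e, 'v) nbp \<Rightarrow> 'e list \<Rightarrow> 'n set" where
  "path_verts Z P = insert (src Z) (ehead Z ` set P)"

definition A :: "('n, 'e, 'v) nbp \<Rightarrow> 'e list \<Rightarrow> 'v lit set" where
  "A Z P = {l. \<exists>e\<in>set P. elab Z e = Some l}"

definition computational :: "('n, 'e, 'v) nbp \<Rightarrow> 'e list \<Rightarrow> bool" where
  "computational Z P \<longleftrightarrow> ss_path Z P \<and> \<not> (\<exists>x. (x, True) \<in> A Z P \<and> (x, False) \<in> A Z P)"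

definition computes :: "('n, 'e, 'v) nbp \<Rightarrow> 'v set \<Rightarrow> ('v lit set \<Rightarrow> bool) \<Rightarrow> bool" where
  "computes Z Var F \<longleftrightarrow>
     (\<forall>S. total_assignment Var S \<longrightarrow> (F S \<longleftrightarrow> (\<exists>P. computational Z P \<and> A Z P \<subseteq> S)))"

definition uniform_read :: "('n, 'e, 'v) nbp \<Rightarrow> 'v set \<Rightarrow> nat \<Rightarrow> bool" where
  "uniform_read Z Var d \<longleftrightarrow> (\<forall>P. ss_path Z P \<longrightarrow>
     (\<forall>x\<in>Var. length (filter (\<lambda>e. \<exists>b. elab Z e = Some (x, b)) P) = d))"

text \<open>Partition of path \<open>P\<close> generated by \<open>X\<close>: \<open>Ps ! k\<close> is \<open>P_{k+1}\<close>.\<close>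
definition gen_partition :: "('n, 'e, 'v) nbp \<Rightarrow> 'e list \<Rightarrow> 'n set \<Rightarrow> 'e list list \<Rightarrow> bool" where
  "gen_partition Z P X Ps \<longleftrightarrow> finite X \<and> concat Ps = P \<and> length Ps = card X + 1
     \<and> (\<forall>Q\<in>set Ps. Q \<noteq> [])
     \<and> X = {ehead Z (last (Ps ! k)) | k. k < card X}"

text \<open>Variables of \<open>Y1\<close> only on odd-indexed parts (1-based), i.e. even 0-based positions,
  and variables of \<open>Y2\<close> only on even-indexed parts.\<close>
definition alternates :: "('n, 'e, 'v) nbp \<Rightarrow> 'e list list \<Rightarrow> 'v set \<Rightarrow> 'v set \<Rightarrow> bool" where
  "alternates Z Ps Y1 Y2 \<longleftrightarrow> (\<forall>k < length Ps. \<forall>e\<in>set (Ps ! k). \<forall>x b.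
      elab Z e = Some (x, b) \<longrightarrow> (x \<in> Y1 \<longrightarrow> even k) \<and> (x \<in> Y2 \<longrightarrow> odd k))"

definition separates :: "('n, 'e, 'v) nbp \<Rightarrow> 'n set \<Rightarrow> 'v set \<Rightarrow> 'v set \<Rightarrow> bool" where
  "separates Z X Y1 Y2 \<longleftrightarrow> X \<subseteq> nodes Z \<and> src Z \<notin> X \<and> snk Z \<notin> X \<and>
     (\<exists>P Ps. computational Z P \<and> X \<subseteq> path_verts Z P \<and> gen_partition Z P X Ps
        \<and> (alternates Z Ps Y1 Y2 \<or> alternates Z Ps Y2 Y1))"

end

theory Submission
  imports Defs
begin


lemma walk_Nil[simp]: "is_walk Z []"
  by (simp add: is_walk_def)

lemma walk_Cons: "is_walk Z (e # P) \<longleftrightarrow> e \<in> edges Z \<and> is_walk Z P \<and> (P \<noteq> [] \<longrightarrow> ehead Z e = etail Z (hd P))"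
proof
  assume a: "is_walk Z (e # P)"
  have "\<forall>k. Suc k < length P \<longrightarrow> ehead Z (P ! k) = etail Z (P ! Suc k)"
  proof (intro allI impI)
    fix k assume "Suc k < length P"
    then show "ehead Z (P ! k) = etail Z (P ! Suc k)"
      using a unfolding is_walk_def by (metis Suc_less_eq length_Cons nth_Cons_Suc)
  qed
  moreover have "P \<noteq> [] \<longrightarrow> ehead Z e = etail Z (hd P)"
    using a unfolding is_walk_def by (metis hd_conv_nth length_Cons length_greater_0_conv nth_Cons_0 nth_Cons_Suc Suc_less_eq)
  ultimately show "e \<in> edges Z \<and> is_walk Z P \<and> (P \<noteq> [] \<longrightarrow> ehead Z e = etail Z (hd P))"
    using a unfolding is_walk_def by auto
next
  assume a: "e \<in> edges Z \<and> is_walk Z P \<and> (P \<noteq> [] \<longrightarrow> ehead Z e = etail Z (hd P))"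
  show "is_walk Z (e # P)"
    unfolding is_walk_def
  proof (intro conjI allI impI)
    show "set (e # P) \<subseteq> edges Z" using a by (auto simp: is_walk_def)
    fix k assume k: "Suc k < length (e # P)"
    show "ehead Z ((e # P) ! k) = etail Z ((e # P) ! Suc k)"
    proof (cases k)
      case 0 then show ?thesis using a k by (auto simp: hd_conv_nth)
    next
      case (Suc k') then show ?thesis using a k by (auto simp: is_walk_def)
    qed
  qed
qed

lemma walk_append: "is_walk Z (xs @ ys) \<longleftrightarrow> is_walk Z xs \<and> is_walk Z ys \<and>
   (xs \<noteq> [] \<longrightarrow> ys \<noteq> [] \<longrightarrow> ehead Z (last xs) = etail Z (hd ys))"
  by (induction xs) (auto simp: walk_Cons)

lemma walk_take: "is_walk Z P \<Longrightarrow> is_walk Z (take n P)"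
  by (metis append_take_drop_id walk_append)

lemma walk_drop: "is_walk Z P \<Longrightarrow> is_walk Z (drop n P)"
  by (metis append_take_drop_id walk_append)

lemma walk_concat: "\<forall>Q\<in>set Ls. Q \<noteq> [] \<Longrightarrow> is_walk Z (concat Ls) \<longleftrightarrow>
  (\<forall>Q\<in>set Ls. is_walk Z Q) \<and> (\<forall>k. Suc k < length Ls \<longrightarrow> ehead Z (last (Ls ! k)) = etail Z (hd (Ls ! Suc k)))"
proof (induction Ls)
  case Nil then show ?case by simp
next
  case (Cons L Ls)
  have hd: "Ls \<noteq> [] \<Longrightarrow> hd (concat Ls) = hd (Ls ! 0)"
    using Cons.prems by (cases Ls) auto
  have ne: "Ls \<noteq> [] \<Longrightarrow> concat Ls \<noteq> []" using Cons.prems by (cases Ls) auto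
  show ?case
  proof
    assume w: "is_walk Z (concat (L # Ls))"
    then have w1: "is_walk Z L" "is_walk Z (concat Ls)"
      and j: "Ls \<noteq> [] \<Longrightarrow> ehead Z (last L) = etail Z (hd (Ls ! 0))"
      using Cons.prems ne hd by (auto simp: walk_append)
    from Cons.IH w1 Cons.prems have ih: "(\<forall>Q\<in>set Ls. is_walk Z Q) \<and> (\<forall>k. Suc k < length Ls \<longrightarrow> ehead Z (last (Ls ! k)) = etail Z (hd (Ls ! Suc k)))" by auto
    show "(\<forall>Q\<in>set (L # Ls). is_walk Z Q) \<and> (\<forall>k. Suc k < length (L # Ls) \<longrightarrow> ehead Z (last ((L # Ls) ! k)) = etail Z (hd ((L # Ls) ! Suc k)))"
    proof (intro conjI allI impI)
      show "\<forall>Q\<in>set (L # Ls). is_walk Z Q" using w1 ih by auto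
      fix k assume "Suc k < length (L # Ls)"
      then show "ehead Z (last ((L # Ls) ! k)) = etail Z (hd ((L # Ls) ! Suc k))"
        using j ih by (cases k) auto
    qed
  next
    assume r: "(\<forall>Q\<in>set (L # Ls). is_walk Z Q) \<and> (\<forall>k. Suc k < length (L # Ls) \<longrightarrow> ehead Z (last ((L # Ls) ! k)) = etail Z (hd ((L # Ls) ! Suc k)))"
    have "is_walk Z (concat Ls)"
      using Cons.IH Cons.prems r by (fastforce)
    moreover have "Ls \<noteq> [] \<Longrightarrow> ehead Z (last L) = etail Z (hd (Ls ! 0))"
      using r[THEN conjunct2, rule_format, of 0] by auto
    ultimately show "is_walk Z (concat (L # Ls))"
      using r hd ne by (simp add: walk_append) (metis equals0D set_empty)
  qed
qed

lemma last_concat: "\<forall>Q\<in>set Ls. Q \<noteq> [] \<Longrightarrow> Ls \<noteq> [] \<Longrightarrow> last (concat Ls) = last (last Ls)"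
  by (induction Ls) auto



definition reach :: "('n, 'e, 'v) nbp \<Rightarrow> 'n \<Rightarrow> 'n \<Rightarrow> bool" where
  "reach Z u w \<longleftrightarrow> (\<exists>W. is_walk Z W \<and> W \<noteq> [] \<and> etail Z (hd W) = u \<and> ehead Z (last W) = w)"

lemma reach_irrefl: "is_nbp Z V \<Longrightarrow> \<not> reach Z u u"
  unfolding is_nbp_def reach_def by metis

lemma reach_trans: "reach Z u w \<Longrightarrow> reach Z w x \<Longrightarrow> reach Z u x"
  unfolding reach_def
proof (elim exE conjE)
  fix W1 W2 assume "is_walk Z W1" "W1 \<noteq> []" "etail Z (hd W1) = u" "ehead Z (last W1) = w"
    "is_walk Z W2" "W2 \<noteq> []" "etail Z (hd W2) = w" "ehead Z (last W2) = x"
  then show "\<exists>W. is_walk Z W \<and> W \<noteq> [] \<and> etail Z (hd W) = u \<and> ehead Z (last W) = x"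
    by (intro exI[of _ "W1 @ W2"]) (auto simp: walk_append)
qed

lemma reach_pos: assumes "is_walk Z P" "i < j" "j < length P"
  shows "reach Z (ehead Z (P!i)) (ehead Z (P!j))"
proof -
  let ?W = "drop (Suc i) (take (Suc j) P)"
  have w: "is_walk Z ?W" using assms by (intro walk_drop walk_take)
  have len: "length ?W = j - i" using assms by simp
  have hd: "hd ?W = P ! Suc i" using assms by (simp add: hd_drop_conv_nth)
  have last: "last ?W = P ! j" using assms
    by (simp add: last_conv_nth) 
  have "ehead Z (P ! i) = etail Z (P ! Suc i)" using assms unfolding is_walk_def by auto
  then show ?thesis unfolding reach_def using w len hd last assms
    by (intro exI[of _ ?W]) auto
qed

lemma reach_mem: assumes "is_walk Z W" "W \<noteq> []" "e \<in> set W"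
  shows "reach Z (etail Z (hd W)) (ehead Z e)"
proof -
  obtain m where m: "m < length W" "W ! m = e" using assms by (metis in_set_conv_nth)
  let ?V = "take (Suc m) W"
  have 1: "is_walk Z ?V" using assms by (simp add: walk_take)
  have 2: "?V \<noteq> []" using assms(2) by simp
  have 3: "hd ?V = hd W" by (simp add: hd_take)
  have 4: "last ?V = e" using m by (simp del: take_Suc add: take_Suc_conv_app_nth)
  show ?thesis unfolding reach_def using 1 2 3 4 by (intro exI[of _ ?V]) simp
qed

lemma cut_lemma:
  assumes nbp: "is_nbp Z V"
  shows "is_walk Z (concat Ps) \<Longrightarrow> \<forall>Q\<in>set Ps. Q \<noteq> [] \<Longrightarrow> Ps \<noteq> [] \<Longrightarrow> is_walk Z P \<Longrightarrow> P \<noteq> [] \<Longrightarrow>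
    \<forall>k < length Ps - 1. ehead Z (last (Ps ! k)) \<in> ehead Z ` set P \<Longrightarrow>
    \<forall>k < length Ps - 1. ehead Z (last P) \<noteq> ehead Z (last (Ps ! k)) \<Longrightarrow>
    \<exists>Qs. length Qs = length Ps \<and> concat Qs = P \<and> (\<forall>Q\<in>set Qs. Q \<noteq> []) \<and>
      (\<forall>k < length Ps - 1. ehead Z (last (Qs ! k)) = ehead Z (last (Ps ! k)))"
proof (induction Ps arbitrary: P)
  case Nil then show ?case by simp
next
  case (Cons Q0 Rest)
  show ?case
  proof (cases "Rest = []")
    case True then show ?thesis using Cons.prems by (intro exI[of _ "[P]"]) auto
  next
    case False
    define x where "x = ehead Z (last Q0)"
    have "x \<in> ehead Z ` set P" using Cons.prems(6) False unfolding x_def by fastforce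
    then obtain m where m: "m < length P" "ehead Z (P ! m) = x" by (metis imageE in_set_conv_nth)
    have "m \<noteq> length P - 1"
    proof
      assume "m = length P - 1"
      then have "ehead Z (last P) = x" using m Cons.prems(5) by (simp add: last_conv_nth)
      then show False using Cons.prems(7) False unfolding x_def by fastforce
    qed
    then have mlt: "Suc m < length P" using m by simp
    define A1 where "A1 = take (Suc m) P"
    define B where "B = drop (Suc m) P"
    have B: "B \<noteq> []" "is_walk Z B" "last B = last P"
      using mlt Cons.prems(4) unfolding B_def by (auto simp: walk_drop)
    have A1a: "A1 \<noteq> []" using m unfolding A1_def by auto
    have A1b: "ehead Z (last A1) = x" using m unfolding A1_def 
      by (simp del: take_Suc add: take_Suc_conv_app_nth)
    have A1c: "A1 @ B = P" unfolding A1_def B_def by simp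
    note A1 = A1a A1b A1c
    have cR: "concat Rest \<noteq> []" using Cons.prems(2) False by (cases Rest) auto
    have wQ: "is_walk Z (Q0 @ concat Rest)" using Cons.prems(1) by simp
    then have wR: "is_walk Z (concat Rest)" and jx: "etail Z (hd (concat Rest)) = x"
      using Cons.prems(2) cR unfolding x_def by (auto simp: walk_append)
    have bd: "\<forall>k < length Rest - 1. ehead Z (last (Rest ! k)) \<in> ehead Z ` set B"
    proof (intro allI impI)
      fix k assume k: "k < length Rest - 1"
      define y where "y = ehead Z (last (Rest ! k))"
      have "y \<in> ehead Z ` set P" using Cons.prems(6)[rule_format, of "Suc k"] k unfolding y_def by simp
      then obtain m' where m': "m' < length P" "ehead Z (P ! m') = y" by (metis imageE in_set_conv_nth)
      have "last (Rest ! k) \<in> set (concat Rest)"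
        using k Cons.prems(2) by (auto intro!: bexI[of _ "Rest ! k"])
      then have rxy: "reach Z x y" using reach_mem[OF wR cR] jx unfolding y_def by metis
      have "m < m'"
      proof (rule ccontr)
        assume "\<not> m < m'"
        then consider "m' = m" | "m' < m" by linarith
        then show False
        proof cases
          case 1 then show False using rxy m m' reach_irrefl[OF nbp] by simp
        next
          case 2
          then have "reach Z y x" using reach_pos[OF Cons.prems(4) 2 m(1)] m m' by simp
          then show False using rxy reach_trans reach_irrefl[OF nbp] by metis
        qed
      qed
      then have "B ! (m' - Suc m) = P ! m'" "m' - Suc m < length B"
        using m' unfolding B_def by auto
      then show "ehead Z (last (Rest ! k)) \<in> ehead Z ` set B"
        using m' unfolding y_def by (metis image_eqI nth_mem)
    qed
    have nb: "\<forall>k < length Rest - 1. ehead Z (last B) \<noteq> ehead Z (last (Rest ! k))"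
    proof (intro allI impI)
      fix k assume "k < length Rest - 1"
      then show "ehead Z (last B) \<noteq> ehead Z (last (Rest ! k))"
        using Cons.prems(7)[rule_format, of "Suc k"] B(3) by simp
    qed
    obtain Qs where Qs: "length Qs = length Rest" "concat Qs = B" "\<forall>Q\<in>set Qs. Q \<noteq> []"
      "\<forall>k < length Rest - 1. ehead Z (last (Qs ! k)) = ehead Z (last (Rest ! k))"
      using Cons.IH[OF wR _ False B(2) B(1) bd nb] Cons.prems(2) by auto
    show ?thesis
    proof (intro exI[of _ "A1 # Qs"] conjI allI impI)
      fix k assume k: "k < length (Q0 # Rest) - 1"
      show "ehead Z (last ((A1 # Qs) ! k)) = ehead Z (last ((Q0 # Rest) ! k))"
      proof (cases k)
        case 0 then show ?thesis using A1 x_def by simp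
      next
        case (Suc k') then show ?thesis using Qs k by auto
      qed
    qed (use Qs A1 in auto)
  qed
qed



definition splc :: "nat set \<Rightarrow> 'a list list \<Rightarrow> 'a list list \<Rightarrow> 'a list list" where
  "splc K As Bs = map (\<lambda>k. if k \<in> K then As ! k else Bs ! k) [0..<length As]"

definition matched :: "('n, 'e, 'v) nbp \<Rightarrow> 'e list list \<Rightarrow> 'e list list \<Rightarrow> bool" where
  "matched Z As Bs \<longleftrightarrow> length As = length Bs \<and> As \<noteq> [] \<and> (\<forall>Q\<in>set As. Q \<noteq> []) \<and> (\<forall>Q\<in>set Bs. Q \<noteq> [])
     \<and> (\<forall>k < length As - 1. ehead Z (last (As ! k)) = ehead Z (last (Bs ! k)))"

lemma hd_concat_nth: "\<forall>Q\<in>set Ls. Q \<noteq> [] \<Longrightarrow> Ls \<noteq> [] \<Longrightarrow> hd (concat Ls) = hd (Ls ! 0)"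
  by (cases Ls) auto

lemma last_concat_nth: "\<forall>Q\<in>set Ls. Q \<noteq> [] \<Longrightarrow> Ls \<noteq> [] \<Longrightarrow> last (concat Ls) = last (Ls ! (length Ls - 1))"
  by (metis last_concat last_conv_nth)

lemma concat_ne: "\<forall>Q\<in>set Ls. Q \<noteq> [] \<Longrightarrow> Ls \<noteq> [] \<Longrightarrow> concat Ls \<noteq> []"
  by (cases Ls) auto

lemma ss_path_ne: "P \<noteq> [] \<Longrightarrow> ss_path Z P \<longleftrightarrow> is_walk Z P \<and> etail Z (hd P) = src Z \<and> ehead Z (last P) = snk Z"
  by (simp add: ss_path_def)

lemma splc_ss:
  assumes m: "matched Z As Bs" and a: "ss_path Z (concat As)" and b: "ss_path Z (concat Bs)"
  shows "ss_path Z (concat (splc K As Bs))"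
proof -
  let ?R = "splc K As Bs"
  have len: "length ?R = length As" by (simp add: splc_def)
  have nth: "\<And>k. k < length As \<Longrightarrow> ?R ! k = (if k \<in> K then As ! k else Bs ! k)"
    by (simp add: splc_def)
  have neA: "\<forall>Q\<in>set As. Q \<noteq> []" "As \<noteq> []" and neB: "\<forall>Q\<in>set Bs. Q \<noteq> []" "Bs \<noteq> []"
    and lenAB: "length Bs = length As"
    using m unfolding matched_def by auto
  have neR: "\<forall>Q\<in>set ?R. Q \<noteq> []" "?R \<noteq> []" using neA neB lenAB
    by (auto simp: splc_def) (metis nth_mem)+
  have cA: "concat As \<noteq> []" using concat_ne[OF neA] .
  have cB: "concat Bs \<noteq> []" using concat_ne[OF neB] .
  have wA: "(\<forall>Q\<in>set As. is_walk Z Q) \<and> (\<forall>k. Suc k < length As \<longrightarrow> ehead Z (last (As ! k)) = etail Z (hd (As ! Suc k)))"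
    using a cA walk_concat[OF neA(1), of Z] unfolding ss_path_ne[OF cA] by blast
  have wB: "(\<forall>Q\<in>set Bs. is_walk Z Q) \<and> (\<forall>k. Suc k < length Bs \<longrightarrow> ehead Z (last (Bs ! k)) = etail Z (hd (Bs ! Suc k)))"
    using b cB walk_concat[OF neB(1), of Z] unfolding ss_path_ne[OF cB] by blast
  have bd: "\<And>k. k < length As - 1 \<Longrightarrow> ehead Z (last (As ! k)) = ehead Z (last (Bs ! k))"
    using m unfolding matched_def by auto
  have "is_walk Z (concat ?R)"
    unfolding walk_concat[OF neR(1)]
  proof (intro conjI allI impI ballI)
    fix Q assume "Q \<in> set ?R"
    then show "is_walk Z Q" using wA wB lenAB by (auto simp: splc_def)
  next
    fix k assume k: "Suc k < length ?R"
    then have k': "Suc k < length As" using len by simp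
    have e1: "ehead Z (last (?R ! k)) = ehead Z (last (As ! k))"
      using nth[of k] k' bd[of k] by auto
    have e2: "etail Z (hd (?R ! Suc k)) = etail Z (hd (As ! Suc k))"
      using nth[of "Suc k"] k' bd[of k] wA wB lenAB by auto
    show "ehead Z (last (?R ! k)) = etail Z (hd (?R ! Suc k))"
      using e1 e2 wA k' by auto
  qed
  moreover have "etail Z (hd (concat ?R)) = src Z"
  proof -
    have "etail Z (hd (As ! 0)) = src Z" "etail Z (hd (Bs ! 0)) = src Z"
      using a b cA cB hd_concat_nth[OF neA] hd_concat_nth[OF neB] by (auto simp: ss_path_ne)
    moreover have "hd (concat ?R) = hd (?R ! 0)" using hd_concat_nth[OF neR] .
    ultimately show ?thesis using nth[of 0] neA by auto
  qed
  moreover have "ehead Z (last (concat ?R)) = snk Z"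
  proof -
    have "ehead Z (last (As ! (length As - 1))) = snk Z" "ehead Z (last (Bs ! (length As - 1))) = snk Z"
      using a b cA cB last_concat_nth[OF neA] last_concat_nth[OF neB] lenAB by (auto simp: ss_path_ne)
    moreover have "last (concat ?R) = last (?R ! (length As - 1))" using last_concat_nth[OF neR] len by simp
    ultimately show ?thesis using nth[of "length As - 1"] neA by auto
  qed
  ultimately show ?thesis using concat_ne[OF neR] by (simp add: ss_path_ne)
qed




lemma splc_mem: "e \<in> set (concat (splc K As Bs)) \<Longrightarrow>
   \<exists>k < length As. (k \<in> K \<and> e \<in> set (As ! k)) \<or> (k \<notin> K \<and> e \<in> set (Bs ! k))"
  by (auto simp: splc_def split: if_splits)

definition cnt :: "('n, 'e, 'v) nbp \<Rightarrow> 'v \<Rightarrow> 'e list \<Rightarrow> nat" where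
  "cnt Z x L = length (filter (\<lambda>e. \<exists>b. elab Z e = Some (x, b)) L)"

lemma cnt_concat: "cnt Z x (concat Ls) = sum_list (map (cnt Z x) Ls)"
  by (induction Ls) (auto simp: cnt_def)

lemma cnt_concat_sum: "cnt Z x (concat Ls) = (\<Sum>k<length Ls. cnt Z x (Ls ! k))"
  by (simp add: cnt_concat sum_list_sum_nth atLeast0LessThan)

lemma cnt_splice: "cnt Z x (concat (splc K As Bs)) =
   (\<Sum>k<length As. if k \<in> K then cnt Z x (As ! k) else cnt Z x (Bs ! k))"
  by (auto simp: cnt_concat_sum splc_def intro!: sum.cong)

definition onlyin :: "('n, 'e, 'v) nbp \<Rightarrow> 'e list list \<Rightarrow> 'v set \<Rightarrow> nat set \<Rightarrow> bool" where
  "onlyin Z Qs Y K \<longleftrightarrow> (\<forall>k < length Qs. \<forall>e\<in>set (Qs ! k). \<forall>x b. elab Z e = Some (x, b) \<longrightarrow> x \<in> Y \<longrightarrow> k \<in> K)"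

lemma cnt_pos: "e \<in> set L \<Longrightarrow> elab Z e = Some (x, b) \<Longrightarrow> cnt Z x L > 0"
  unfolding cnt_def length_greater_0_conv filter_empty_conv by blast

lemma onlyin_transfer:
  assumes u: "uniform_read Z V d" and Y: "Y \<subseteq> V" and m: "matched Z Ps Qs"
    and a: "ss_path Z (concat Ps)" and b: "ss_path Z (concat Qs)" and o: "onlyin Z Ps Y K"
  shows "onlyin Z Qs Y K"
  unfolding onlyin_def
proof (intro allI impI ballI)
  fix k e x b assume k: "k < length Qs" and e: "e \<in> set (Qs ! k)" and l: "elab Z e = Some (x, b)" and x: "x \<in> Y"
  show "k \<in> K"
  proof (rule ccontr)
    assume nk: "k \<notin> K"
    have len: "length Qs = length Ps" using m by (simp add: matched_def)
    have cntd: "\<And>P. ss_path Z P \<Longrightarrow> cnt Z x P = d"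
      using u x Y unfolding uniform_read_def cnt_def by auto
    have r: "cnt Z x (concat (splc K Ps Qs)) = d" using cntd[OF splc_ss[OF m a b]] .
    have p: "cnt Z x (concat Ps) = d" using cntd[OF a] .
    have z: "\<And>j. j < length Ps \<Longrightarrow> j \<notin> K \<Longrightarrow> cnt Z x (Ps ! j) = 0"
    proof (rule ccontr)
      fix j assume j: "j < length Ps" "j \<notin> K" "cnt Z x (Ps ! j) \<noteq> 0"
      then have "filter (\<lambda>e. \<exists>b. elab Z e = Some (x, b)) (Ps ! j) \<noteq> []" by (simp add: cnt_def)
      then obtain e' where "e' \<in> set (Ps ! j)" "\<exists>b. elab Z e' = Some (x, b)"
        unfolding filter_empty_conv by blast
      then show False using o j x unfolding onlyin_def by blast
    qed
    have E1: "(\<Sum>j<length Ps. cnt Z x (Ps ! j)) = (\<Sum>j<length Ps. if j \<in> K then cnt Z x (Ps ! j) else 0)"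
      using z by (intro sum.cong) auto
    have E2: "(\<Sum>j<length Ps. if j \<in> K then cnt Z x (Ps ! j) else cnt Z x (Qs ! j)) =
       (\<Sum>j<length Ps. if j \<in> K then cnt Z x (Ps ! j) else 0) + (\<Sum>j<length Ps. if j \<in> K then 0 else cnt Z x (Qs ! j))"
      by (simp add: sum.distrib[symmetric] if_distrib) (intro sum.cong, auto)
    have "(\<Sum>j<length Ps. if j \<in> K then 0 else cnt Z x (Qs ! j)) = 0"
    proof -
      have r': "(\<Sum>j<length Ps. if j \<in> K then cnt Z x (Ps ! j) else cnt Z x (Qs ! j)) = d"
        using r by (simp only: cnt_splice)
      have p': "(\<Sum>j<length Ps. cnt Z x (Ps ! j)) = d" using p by (simp only: cnt_concat_sum)
      show ?thesis using E1 E2 r' p' by linarith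
    qed
    then have "(if k \<in> K then 0 else cnt Z x (Qs ! k)) = 0"
      using k len by (subst (asm) sum_eq_0_iff) auto
    then show False using nk cnt_pos[OF e l] by simp
  qed
qed



lemma rt_facts: assumes "rooted_tree V E r"
  shows "finite V" "r \<in> V" "E \<subseteq> V \<times> V" "\<And>v. v \<in> V \<Longrightarrow> (r, v) \<in> E\<^sup>*"
proof -
  have h: "finite V \<and> r \<in> V \<and> E \<subseteq> V \<times> V \<and> (\<forall>v\<in>V. (r, v) \<in> E\<^sup>*)"
    using assms unfolding rooted_tree_def by (elim conjE) (intro conjI; assumption)
  then show "finite V" "r \<in> V" "E \<subseteq> V \<times> V" by simp_all
  fix v assume "v \<in> V" then show "(r, v) \<in> E\<^sup>*" using h by simp
qed

lemma bt_rooted: "binary_tree_based H \<Longrightarrow> i \<in> tidx H \<Longrightarrow> rooted_tree (tverts H i) (tedges H i) (troot H i)"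
  unfolding binary_tree_based_def extended_tree_def by simp

lemma bt_root_mem: "binary_tree_based H \<Longrightarrow> i \<in> tidx H \<Longrightarrow> troot H i \<in> tverts H i"
  using rt_facts[OF bt_rooted[of H i]] by simp

lemma bt_card: "binary_tree_based H \<Longrightarrow> i \<in> tidx H \<Longrightarrow> k \<in> tidx H \<Longrightarrow> i \<noteq> k \<Longrightarrow>
   card (tverts H i \<inter> tverts H k) \<le> 1"
  unfolding binary_tree_based_def by simp

lemma bt_fin: "binary_tree_based H \<Longrightarrow> i \<in> tidx H \<Longrightarrow> finite (tverts H i)"
  using rt_facts[OF bt_rooted[of H i]] by simp

lemma bt_reach: "binary_tree_based H \<Longrightarrow> i \<in> tidx H \<Longrightarrow> v \<in> tverts H i \<Longrightarrow> (troot H i, v) \<in> (tedges H i)\<^sup>*"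
  using rt_facts[OF bt_rooted[of H i]] by simp

lemma bt_sub: "binary_tree_based H \<Longrightarrow> i \<in> tidx H \<Longrightarrow> tedges H i \<subseteq> tverts H i \<times> tverts H i"
  using rt_facts[OF bt_rooted[of H i]] by simp

lemma lvs_sub: "lvs H i \<subseteq> tverts H i"
  unfolding lvs_def tree_leaves_def by auto

lemma root_not_lvs: "troot H i \<notin> lvs H i"
  unfolding lvs_def tree_leaves_def by auto

lemma bt_inter: "binary_tree_based H \<Longrightarrow> i \<in> tidx H \<Longrightarrow> k \<in> tidx H \<Longrightarrow> i \<noteq> k \<Longrightarrow>
   tverts H i \<inter> tverts H k \<subseteq> lvs H i \<inter> lvs H k"
  unfolding binary_tree_based_def by simp

lemma roots_inj: assumes bt: "binary_tree_based H" and "i \<in> tidx H" "k \<in> tidx H" "troot H i = troot H k"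
  shows "i = k"
proof (rule ccontr)
  assume "i \<noteq> k"
  then have "tverts H i \<inter> tverts H k \<subseteq> lvs H i \<inter> lvs H k" using bt_inter[OF bt assms(2,3)] by simp
  moreover have "troot H k \<in> tverts H i \<inter> tverts H k"
    using bt_root_mem[OF bt assms(2)] bt_root_mem[OF bt assms(3)] assms(4) by simp
  ultimately have "troot H k \<in> lvs H k" by (meson IntD2 subsetD)
  then show False using root_not_lvs[of H k] by simp
qed

lemma shared_leaf_mem: assumes bt: "binary_tree_based H" and adj: "adjacent H i j"
  shows "shared_leaf H i j \<in> lvs H i \<inter> lvs H j"
proof -
  have i: "i \<in> tidx H" "j \<in> tidx H" "i \<noteq> j" and ne: "lvs H i \<inter> lvs H j \<noteq> {}"
    using adj unfolding adjacent_def by auto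
  have fin: "finite (tverts H i)" using bt_fin[OF bt i(1)] .
  have "card (tverts H i \<inter> tverts H j) \<le> 1" using bt_card[OF bt i] .
  then have u: "\<forall>a\<in>tverts H i \<inter> tverts H j. \<forall>b\<in>tverts H i \<inter> tverts H j. a = b"
    using card_le_Suc0_iff_eq[of "tverts H i \<inter> tverts H j"] fin by simp
  obtain l where l: "l \<in> lvs H i \<inter> lvs H j" using ne by blast
  have "\<And>l'. l' \<in> lvs H i \<inter> lvs H j \<Longrightarrow> l' = l"
  proof -
    fix l' assume "l' \<in> lvs H i \<inter> lvs H j"
    then have "l' \<in> tverts H i \<inter> tverts H j" "l \<in> tverts H i \<inter> tverts H j"
      using l lvs_sub[of H i] lvs_sub[of H j] by auto
    then show "l' = l" using u by blast
  qed
  then have "(THE l. l \<in> lvs H i \<inter> lvs H j) = l" using l by (intro the_equality) blast+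
  then show ?thesis using l unfolding shared_leaf_def by simp
qed

lemma root_in_half: assumes bt: "binary_tree_based H" and adj: "adjacent H i j"
  shows "troot H i \<in> half_path H i j"
proof -
  have i: "i \<in> tidx H" using adj unfolding adjacent_def by auto
  have "shared_leaf H i j \<in> tverts H i" using shared_leaf_mem[OF bt adj] lvs_sub[of H i] by blast
  then show ?thesis using bt_reach[OF bt i] unfolding half_path_def by simp
qed

lemma half_root: assumes bt: "binary_tree_based H" and adj: "adjacent H i j" and k: "k \<in> tidx H"
  and h: "troot H k \<in> half_path H i j"
  shows "k = i"
proof -
  have i: "i \<in> tidx H" using adj unfolding adjacent_def by auto
  have l: "shared_leaf H i j \<in> tverts H i" using shared_leaf_mem[OF bt adj] lvs_sub[of H i] by blast
  have sub: "tedges H i \<subseteq> tverts H i \<times> tverts H i" using bt_sub[OF bt i] .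
  have "(troot H k, shared_leaf H i j) \<in> (tedges H i)\<^sup>*" using h unfolding half_path_def by simp
  then have "troot H k \<in> tverts H i"
    by (cases rule: converse_rtranclE) (use l sub in auto)
  show "k = i"
  proof (rule ccontr)
    assume "k \<noteq> i"
    then have "troot H k \<in> lvs H k"
      using bt_inter[OF bt i k] \<open>troot H k \<in> tverts H i\<close> bt_root_mem[OF bt k] by blast
    then show False using root_not_lvs by metis
  qed
qed

lemma tree_of_root_eq: assumes bt: "binary_tree_based H" and i: "i \<in> tidx H"
  shows "tree_of_root H (troot H i) = i"
  unfolding tree_of_root_def
proof (rule the_equality)
  show "i \<in> tidx H \<and> troot H i = troot H i" using i by simp
  fix k assume "k \<in> tidx H \<and> troot H k = troot H i"
  then show "k = i" using roots_inj[OF bt, of k i] i by blast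
qed

lemma half_clause_eq: assumes bt: "binary_tree_based H" and adj: "adjacent H i j"
  shows "half_clause H {troot H i, troot H j} (troot H i) = pos_clause (half_path H i j)"
proof -
  have i: "i \<in> tidx H" "j \<in> tidx H" "i \<noteq> j" using adj unfolding adjacent_def by auto
  then have "troot H i \<noteq> troot H j" using roots_inj[OF bt] by metis
  then have "{troot H i, troot H j} - {troot H i} = {troot H j}" by auto
  then show ?thesis unfolding half_clause_def using tree_of_root_eq[OF bt] i by simp
qed

lemma adj_sym: "adjacent H i j \<Longrightarrow> adjacent H j i"
  unfolding adjacent_def by auto

lemma lab_V: "is_nbp Z V \<Longrightarrow> is_walk Z P \<Longrightarrow> (x, b) \<in> A Z P \<Longrightarrow> x \<in> V"
  unfolding is_nbp_def is_walk_def A_def by force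

lemma phi_sat:
  assumes nbp: "is_nbp Z (HV H)" and comp: "computes Z (HV H) (\<lambda>S. satisfies S (phi_H H))"
    and P: "computational Z P"
  shows "satisfies (A Z P) (phi_H H)"
proof -
  define S' where "S' = A Z P \<union> {(x, False) | x. x \<in> HV H \<and> (x, True) \<notin> A Z P}"
  have w: "is_walk Z P" using P unfolding computational_def ss_path_def by auto
  have cons: "\<And>x. \<not> ((x, True) \<in> A Z P \<and> (x, False) \<in> A Z P)" using P unfolding computational_def by blast
  have "total_assignment (HV H) S'"
    unfolding total_assignment_def
  proof (intro conjI ballI)
    show "S' \<subseteq> HV H \<times> UNIV"
    proof
      fix l assume "l \<in> S'"
      then show "l \<in> HV H \<times> UNIV" unfolding S'_def using lab_V[OF nbp w] by (cases l) auto
    qed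
  next
    fix x assume "x \<in> HV H"
    then show "((x, True) \<in> S') = ((x, False) \<notin> S')" using cons[of x] unfolding S'_def by auto
  qed
  moreover have "A Z P \<subseteq> S'" unfolding S'_def by auto
  ultimately have sat: "satisfies S' (phi_H H)" using comp P unfolding computes_def by blast
  show ?thesis unfolding satisfies_def
  proof
    fix C assume C: "C \<in> phi_H H"
    then obtain V0 where V0: "C = pos_clause V0" unfolding phi_H_def by auto
    obtain l where "l \<in> C" "l \<in> S'" using sat C unfolding satisfies_def by blast
    then have "l \<in> A Z P" using V0 unfolding S'_def pos_clause_def by auto
    then show "C \<inter> A Z P \<noteq> {}" using \<open>l \<in> C\<close> by blast
  qed
qed



lemma edge_facts:
  assumes pm: "pseudomatching_between H M Y1 Y2" and e: "e \<in> M" and dis: "Y1 \<inter> Y2 = {}"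
  shows "\<exists>i j. adjacent H i j \<and> the_elem (e \<inter> Y1) = troot H i \<and> the_elem (e \<inter> Y2) = troot H j
     \<and> e = {troot H i, troot H j} \<and> troot H i \<in> Y1 \<and> troot H j \<in> Y2"
proof -
  have pe: "pseudoedge H e" and c1: "card (e \<inter> Y1) = 1" and c2: "card (e \<inter> Y2) = 1"
    using pm e unfolding pseudomatching_between_def by auto
  obtain a where a: "e \<inter> Y1 = {a}" using c1 card_1_singletonE by blast
  obtain b where b: "e \<inter> Y2 = {b}" using c2 card_1_singletonE by blast
  obtain i j where adj: "adjacent H i j" and ee: "e = {troot H i, troot H j}"
    using pe unfolding pseudoedge_def by blast
  have ab: "a \<in> e" "b \<in> e" "a \<in> Y1" "b \<in> Y2" "a \<noteq> b" using a b dis by auto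
  have ta: "the_elem (e \<inter> Y1) = a" using a by simp
  have tb: "the_elem (e \<inter> Y2) = b" using b by simp
  have "(a = troot H i \<and> b = troot H j) \<or> (a = troot H j \<and> b = troot H i)" using ee ab by auto
  then show ?thesis
  proof
    assume h: "a = troot H i \<and> b = troot H j"
    show ?thesis using adj h ee ab ta tb by blast
  next
    assume h: "a = troot H j \<and> b = troot H i"
    have "e = {troot H j, troot H i}" using ee by auto
    then show ?thesis using adj_sym[OF adj] h ab ta tb by blast
  qed
qed

theorem lemma7:
  fixes H :: "('i, 'v) tbg" and Z :: "('n, 'e, 'v) nbp" and d :: nat
    and X :: "'n set" and Y1 Y2 :: "'v set" and M :: "'v set set"
  assumes "binary_tree_based H"
    and "is_nbp Z (HV H)"
    and "uniform_read Z (HV H) d"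
    and "computes Z (HV H) (\<lambda>S. satisfies S (phi_H H))"
    and "Y1 \<subseteq> Roots H" and "Y2 \<subseteq> Roots H" and "Y1 \<inter> Y2 = {}"
    and "separates Z X Y1 Y2"
    and "pseudomatching_between H M Y1 Y2"
  shows "\<forall>S. total_assignment (HV H - \<Union>M) S \<longrightarrow>
           (\<exists>\<phi>\<in>CNF_M H M. \<forall>P. computational Z P \<and> X \<subseteq> path_verts Z P \<and> S \<subseteq> A Z P
              \<longrightarrow> satisfies (A Z P) \<phi>)"
proof (intro allI impI)
  fix S assume tot: "total_assignment (HV H - \<Union>M) S"
  note bt = assms(1) and nbp = assms(2) and ur = assms(3) and comp = assms(4)
    and sep = assms(8) and pm = assms(9)
  have dis: "Y1 \<inter> Y2 = {}" by fact
  obtain P0 Ps where P0: "computational Z P0" "X \<subseteq> path_verts Z P0" and gp: "gen_partition Z P0 X Ps"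
    and alt: "alternates Z Ps Y1 Y2 \<or> alternates Z Ps Y2 Y1"
    and Xn: "src Z \<notin> X" "snk Z \<notin> X"
    using sep unfolding separates_def by blast
  define N where "N = card X"
  have gpf: "concat Ps = P0" "length Ps = N + 1" "\<forall>Q\<in>set Ps. Q \<noteq> []"
    using gp unfolding gen_partition_def N_def by auto
  have gpf4: "X = {ehead Z (last (Ps ! k)) | k. k < N}"
    unfolding N_def using gp unfolding gen_partition_def by (elim conjE) assumption
  have Psne: "Ps \<noteq> []" using gpf(2) by auto
  have ssP0: "ss_path Z (concat Ps)" using P0 gpf unfolding computational_def by simp
  have P0ne: "P0 \<noteq> []" using concat_ne[OF gpf(3) Psne] gpf(1) by simp
  have srcsnk: "src Z \<noteq> snk Z"
  proof
    assume eq: "src Z = snk Z"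
    have "is_walk Z P0" "etail Z (hd P0) = src Z" "ehead Z (last P0) = snk Z"
      using P0(1) P0ne unfolding computational_def ss_path_def by auto
    then show False using nbp P0ne eq unfolding is_nbp_def by metis
  qed
  obtain K where oK1: "onlyin Z Ps Y1 K" and oK2: "onlyin Z Ps Y2 (-K)"
  proof -
    from alt show ?thesis
    proof
      assume "alternates Z Ps Y1 Y2"
      then have "onlyin Z Ps Y1 {k. even k}" "onlyin Z Ps Y2 (-{k. even k})"
        unfolding alternates_def onlyin_def by auto
      then show ?thesis using that by blast
    next
      assume "alternates Z Ps Y2 Y1"
      then have "onlyin Z Ps Y1 {k. odd k}" "onlyin Z Ps Y2 (-{k. odd k})"
        unfolding alternates_def onlyin_def by auto
      then show ?thesis using that by blast
    qed
  qed
  have Rts: "Roots H \<subseteq> HV H" using bt_root_mem[OF bt] unfolding Roots_def HV_def by blast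
  have Y1V: "Y1 \<subseteq> HV H" and Y2V: "Y2 \<subseteq> HV H" using assms(5,6) Rts by auto
  have part: "\<And>P. computational Z P \<Longrightarrow> X \<subseteq> path_verts Z P \<Longrightarrow>
      \<exists>Qs. matched Z Ps Qs \<and> concat Qs = P \<and> onlyin Z Qs Y1 K \<and> onlyin Z Qs Y2 (-K)"
  proof -
    fix P assume cP: "computational Z P" and XP: "X \<subseteq> path_verts Z P"
    have ssP: "ss_path Z P" using cP unfolding computational_def by simp
    have Pne: "P \<noteq> []" using ssP srcsnk unfolding ss_path_def by auto
    have wP: "is_walk Z P" "ehead Z (last P) = snk Z" using ssP Pne unfolding ss_path_def by auto
    have wPs: "is_walk Z (concat Ps)" using ssP0 unfolding ss_path_def by simp
    have bdX: "\<And>k. k < length Ps - 1 \<Longrightarrow> ehead Z (last (Ps ! k)) \<in> X"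
    proof -
      fix k assume "k < length Ps - 1"
      then have "k < N" using gpf(2) by simp
      then show "ehead Z (last (Ps ! k)) \<in> X" by (subst gpf4) blast
    qed
    have h1: "\<forall>k<length Ps - 1. ehead Z (last (Ps ! k)) \<in> ehead Z ` set P"
    proof (intro allI impI)
      fix k assume "k < length Ps - 1"
      then have "ehead Z (last (Ps ! k)) \<in> path_verts Z P" "ehead Z (last (Ps ! k)) \<noteq> src Z"
        using bdX[of k] XP Xn by auto
      then show "ehead Z (last (Ps ! k)) \<in> ehead Z ` set P" unfolding path_verts_def by auto
    qed
    have h2: "\<forall>k<length Ps - 1. ehead Z (last P) \<noteq> ehead Z (last (Ps ! k))"
      using bdX Xn wP(2) by metis
    obtain Qs where Qs: "length Qs = length Ps" "concat Qs = P" "\<forall>Q\<in>set Qs. Q \<noteq> []"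
      "\<forall>k<length Ps - 1. ehead Z (last (Qs ! k)) = ehead Z (last (Ps ! k))"
      using cut_lemma[OF nbp wPs gpf(3) Psne wP(1) Pne h1 h2] by blast
    have m: "matched Z Ps Qs" unfolding matched_def using Qs Psne gpf(3) by auto
    have ssQ: "ss_path Z (concat Qs)" using ssP Qs(2) by simp
    show "\<exists>Qs. matched Z Ps Qs \<and> concat Qs = P \<and> onlyin Z Qs Y1 K \<and> onlyin Z Qs Y2 (-K)"
      using m Qs(2) onlyin_transfer[OF ur Y1V m ssP0 ssQ oK1] onlyin_transfer[OF ur Y2V m ssP0 ssQ oK2]
      by blast
  qed
  define good where "good P \<longleftrightarrow> computational Z P \<and> X \<subseteq> path_verts Z P \<and> S \<subseteq> A Z P" for P
  have UM: "\<Union>M \<subseteq> Y1 \<union> Y2"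
  proof
    fix x assume "x \<in> \<Union>M"
    then obtain e where e: "e \<in> M" "x \<in> e" by blast
    then show "x \<in> Y1 \<union> Y2" using edge_facts[OF pm e(1) dis] by auto
  qed
  have key: "\<And>i j P1 P2. adjacent H i j \<Longrightarrow> troot H i \<in> Y1 \<Longrightarrow> troot H j \<in> Y2 \<Longrightarrow> good P1 \<Longrightarrow> good P2 \<Longrightarrow>
      pos_clause (half_path H i j) \<inter> A Z P1 \<noteq> {} \<or> pos_clause (half_path H j i) \<inter> A Z P2 \<noteq> {}"
  proof (rule ccontr)
    fix i j P1 P2 assume adj: "adjacent H i j" and a: "troot H i \<in> Y1" and b: "troot H j \<in> Y2"
      and g1: "good P1" and g2: "good P2"
      and n: "\<not> (pos_clause (half_path H i j) \<inter> A Z P1 \<noteq> {} \<or> pos_clause (half_path H j i) \<inter> A Z P2 \<noteq> {})"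
    have n1: "\<And>v. v \<in> half_path H i j \<Longrightarrow> (v, True) \<notin> A Z P1"
      and n2: "\<And>v. v \<in> half_path H j i \<Longrightarrow> (v, True) \<notin> A Z P2"
      using n unfolding pos_clause_def by auto
    have cP1: "computational Z P1" and S1: "S \<subseteq> A Z P1" and XP1: "X \<subseteq> path_verts Z P1"
      using g1 unfolding good_def by auto
    have cP2: "computational Z P2" and S2: "S \<subseteq> A Z P2" and XP2: "X \<subseteq> path_verts Z P2"
      using g2 unfolding good_def by auto
    have c1: "\<And>x. \<not> ((x, True) \<in> A Z P1 \<and> (x, False) \<in> A Z P1)" using cP1 unfolding computational_def by blast
    have c2: "\<And>x. \<not> ((x, True) \<in> A Z P2 \<and> (x, False) \<in> A Z P2)" using cP2 unfolding computational_def by blast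
    obtain Q1s where Q1: "matched Z Ps Q1s" "concat Q1s = P1" "onlyin Z Q1s Y1 K" "onlyin Z Q1s Y2 (-K)"
      using part[OF cP1 XP1] by blast
    obtain Q2s where Q2: "matched Z Ps Q2s" "concat Q2s = P2" "onlyin Z Q2s Y1 K" "onlyin Z Q2s Y2 (-K)"
      using part[OF cP2 XP2] by blast
    have m12: "matched Z Q1s Q2s" using Q1(1) Q2(1) unfolding matched_def by auto
    have ss1: "ss_path Z (concat Q1s)" using cP1 Q1(2) unfolding computational_def by simp
    have ss2: "ss_path Z (concat Q2s)" using cP2 Q2(2) unfolding computational_def by simp
    define R where "R = concat (splc K Q1s Q2s)"
    have ssR: "ss_path Z R" unfolding R_def using splc_ss[OF m12 ss1 ss2] .
    have Rne: "R \<noteq> []" using ssR srcsnk unfolding ss_path_def by auto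
    have wR: "is_walk Z R" using ssR unfolding ss_path_def by simp
    have len: "length Q2s = length Q1s" using m12 unfolding matched_def by simp
    have lit: "\<And>x \<beta>. (x, \<beta>) \<in> A Z R \<Longrightarrow> (x, \<beta>) \<in> A Z P1 \<union> A Z P2 \<and> (x \<in> Y1 \<longrightarrow> (x, \<beta>) \<in> A Z P1) \<and> (x \<in> Y2 \<longrightarrow> (x, \<beta>) \<in> A Z P2)"
    proof -
      fix x \<beta> assume "(x, \<beta>) \<in> A Z R"
      then obtain e where e: "e \<in> set R" "elab Z e = Some (x, \<beta>)" unfolding A_def by auto
      obtain k where k: "k < length Q1s" "(k \<in> K \<and> e \<in> set (Q1s ! k)) \<or> (k \<notin> K \<and> e \<in> set (Q2s ! k))"
        using splc_mem[OF e(1)[unfolded R_def]] by blast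
      show "(x, \<beta>) \<in> A Z P1 \<union> A Z P2 \<and> (x \<in> Y1 \<longrightarrow> (x, \<beta>) \<in> A Z P1) \<and> (x \<in> Y2 \<longrightarrow> (x, \<beta>) \<in> A Z P2)"
      proof (cases "k \<in> K")
        case True
        then have ek: "e \<in> set (Q1s ! k)" using k by simp
        then have "e \<in> set P1" using k(1) Q1(2) by (metis in_set_conv_nth set_concat UN_I)
        then have inA: "(x, \<beta>) \<in> A Z P1" using e(2) unfolding A_def by auto
        have "x \<notin> Y2" using Q1(4) k(1) True ek e(2) unfolding onlyin_def by blast
        then show ?thesis using inA by auto
      next
        case False
        then have ek: "e \<in> set (Q2s ! k)" using k by simp
        then have "e \<in> set P2" using k(1) len Q2(2) by (metis in_set_conv_nth set_concat UN_I)
        then have inA: "(x, \<beta>) \<in> A Z P2" using e(2) unfolding A_def by auto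
        have "x \<notin> Y1" using Q2(3) k(1) len False ek e(2) unfolding onlyin_def by fastforce
        then show ?thesis using inA by auto
      qed
    qed
    have cR: "computational Z R" unfolding computational_def
    proof (intro conjI notI)
      show "ss_path Z R" by (rule ssR)
    next
      assume "\<exists>x. (x, True) \<in> A Z R \<and> (x, False) \<in> A Z R"
      then obtain x where x1: "(x, True) \<in> A Z R" and x2: "(x, False) \<in> A Z R" by blast
      show False
      proof (cases "x \<in> Y1")
        case True then show False using lit[OF x1] lit[OF x2] c1 by blast
      next
        case nY1: False
        show False
        proof (cases "x \<in> Y2")
          case True then show False using lit[OF x1] lit[OF x2] c2 by blast
        next
          case False
          have xV: "x \<in> HV H" using lab_V[OF nbp wR x1] .
          have xM: "x \<notin> \<Union>M" using UM nY1 False by blast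
          have "(x, True) \<in> S \<or> (x, False) \<in> S" using tot xV xM unfolding total_assignment_def by blast
          then show False using lit[OF x1] lit[OF x2] c1 c2 S1 S2 by blast
        qed
      qed
    qed
    have sat: "satisfies (A Z R) (phi_H H)" using phi_sat[OF nbp comp cR] .
    have "pos_clause (full_path H i j) \<in> phi_H H" using adj unfolding phi_H_def by blast
    then have "pos_clause (full_path H i j) \<inter> A Z R \<noteq> {}" using sat unfolding satisfies_def by blast
    then obtain v where v: "(v, True) \<in> A Z R" "v \<in> half_path H i j \<union> half_path H j i"
      unfolding full_path_def pos_clause_def by blast
    show False
    proof (cases "v \<in> Y1")
      case True
      then obtain k where k: "k \<in> tidx H" "v = troot H k" using assms(5) unfolding Roots_def by blast
      have "k = i \<or> k = j"
        using v(2) k half_root[OF bt adj k(1)] half_root[OF bt adj_sym[OF adj] k(1)] by auto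
      then have "v = troot H i" using k b True dis by auto
      then show False using lit[OF v(1)] True n1 root_in_half[OF bt adj] by auto
    next
      case nY1: False
      show False
      proof (cases "v \<in> Y2")
        case True
        then obtain k where k: "k \<in> tidx H" "v = troot H k" using assms(6) unfolding Roots_def by blast
        have "k = i \<or> k = j"
          using v(2) k half_root[OF bt adj k(1)] half_root[OF bt adj_sym[OF adj] k(1)] by auto
        then have "v = troot H j" using k a True dis by auto
        then show False using lit[OF v(1)] True n2 root_in_half[OF bt adj_sym[OF adj]] by auto
      next
        case False
        have vV: "v \<in> HV H" using lab_V[OF nbp wR v(1)] .
        have vM: "v \<notin> \<Union>M" using UM nY1 False by blast
        have "(v, True) \<in> S \<or> (v, False) \<in> S" using tot vV vM unfolding total_assignment_def by blast
        then have "(v, True) \<in> S" using lit[OF v(1)] c1 c2 S1 S2 by blast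
        then have "(v, True) \<in> A Z P1" "(v, True) \<in> A Z P2" using S1 S2 by auto
        then show False using v(2) n1 n2 by blast
      qed
    qed
  qed
  define a where "a e = the_elem (e \<inter> Y1)" for e
  define b where "b e = the_elem (e \<inter> Y2)" for e
  define c where "c e = (if (\<forall>P. good P \<longrightarrow> half_clause H e (a e) \<inter> A Z P \<noteq> {}) then a e else b e)" for e
  have cin: "\<forall>e\<in>M. c e \<in> e"
  proof
    fix e assume e: "e \<in> M"
    obtain i j where "a e = troot H i" "b e = troot H j" "e = {troot H i, troot H j}"
      using edge_facts[OF pm e dis] unfolding a_def b_def by blast
    then show "c e \<in> e" unfolding c_def by auto
  qed
  have inC: "(\<lambda>e. half_clause H e (c e)) ` M \<in> CNF_M H M" unfolding CNF_M_def using cin by blast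
  have satall: "\<forall>P. good P \<longrightarrow> satisfies (A Z P) ((\<lambda>e. half_clause H e (c e)) ` M)"
  proof (intro allI impI)
    fix P assume gP: "good P"
    show "satisfies (A Z P) ((\<lambda>e. half_clause H e (c e)) ` M)" unfolding satisfies_def
    proof
      fix C assume "C \<in> (\<lambda>e. half_clause H e (c e)) ` M"
      then obtain e where e: "e \<in> M" "C = half_clause H e (c e)" by blast
      obtain i j where ij: "adjacent H i j" "a e = troot H i" "b e = troot H j" "e = {troot H i, troot H j}"
        "troot H i \<in> Y1" "troot H j \<in> Y2"
        using edge_facts[OF pm e(1) dis] unfolding a_def b_def by blast
      have hi: "half_clause H e (troot H i) = pos_clause (half_path H i j)"
        using half_clause_eq[OF bt ij(1)] ij(4) by simp
      have hj: "half_clause H e (troot H j) = pos_clause (half_path H j i)"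
        using half_clause_eq[OF bt adj_sym[OF ij(1)]] ij(4) by (simp add: insert_commute)
      show "C \<inter> A Z P \<noteq> {}"
      proof (cases "\<forall>P. good P \<longrightarrow> half_clause H e (a e) \<inter> A Z P \<noteq> {}")
        case True then show ?thesis using e gP unfolding c_def by auto
      next
        case False
        then obtain P1 where P1: "good P1" "half_clause H e (a e) \<inter> A Z P1 = {}" by blast
        then have "pos_clause (half_path H j i) \<inter> A Z P \<noteq> {}"
          using key[OF ij(1) ij(5) ij(6) P1(1) gP] hi ij(2) by auto
        then show ?thesis using e False hj ij(3) unfolding c_def by auto
      qed
    qed
  qed
  show "\<exists>\<phi>\<in>CNF_M H M. \<forall>P. computational Z P \<and> X \<subseteq> path_verts Z P \<and> S \<subseteq> A Z P
              \<longrightarrow> satisfies (A Z P) \<phi>"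
    using inC satall unfolding good_def by blast
qed

end
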